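(* The flux recovery operator $R_\delta\ddot q(x)=\int_{\Omega_\delta}(x-x')\ddot q(x,x')\omega_\delta(x-x')\,dx'$ is a bounded linear operator from $L^{1,2}(\Omega_\delta\times\Omega_\delta)$ to $L^1(\Omega_\delta;\mathbb{R}^n)$, with operator norm $\|R_\delta\|\le1$.
   Context: $\Omega\subset\mathbb{R}^n$ ($n\ge2$) is a bounded open set, $\delta>0$, $\Omega_\delta=\bigcup_{x\in\Omega}B(x,\delta)$. $K_{2,n}=|\mathbb{S}^{n-1}|^{-1}\int_{\mathbb{S}^{n-1}}|s\cdot e|^2ds$ for a unit vector $e$. $\omega_\delta:\mathbb{R}^n\to[0,\infty)$ is radial, measurable, supported in $B(0,\delta)$, with $\int_{\mathbb{R}^n}|z|^2\omega_\delta^2(z)dz=K_{2,n}^{-1}$. $L^{1,2}(\Omega_\delta\times\Omega_\delta)$ is the mixed-norm space with norm $\int_{\Omega_\delta}(\int_{\Omega_\delta}|\ddot q(x,x')|^2dx')^{1/2}dx$; $L^1(\Omega_\delta;\mathbb{R}^n)$ is normed by $\int|\cdot|$ with $|\cdot|$ Euclidean. *)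

theory Defs
  imports "HOL-Analysis.Analysis"
begin

definition nbhd :: "'a::euclidean_space set \<Rightarrow> real \<Rightarrow> 'a set" where
  "nbhd \<Omega> d = (\<Union>x\<in>\<Omega>. ball x d)"

text \<open>Average of a function over the unit sphere S^(n-1) with respect to normalised
  surface measure, expressed (via polar coordinates) through the 0-homogeneous
  extension to the unit ball: avg_S f = (integral over B(0,1) of f(x/|x|)) / |B(0,1)|.\<close>
definition sphere_avg :: "('a::euclidean_space \<Rightarrow> real) \<Rightarrow> real" where
  "sphere_avg f = (\<integral>x\<in>ball 0 1. f (x /\<^sub>R norm x) \<partial>lebesgue) / measure lebesgue (ball (0::'a) 1)"

definition K2 :: "'a::euclidean_space \<Rightarrow> real" where
  "K2 e = sphere_avg (\<lambda>s. \<bar>s \<bullet> e\<bar> ^ 2)"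

definition inner_L2 :: "'a::euclidean_space set \<Rightarrow> ('a \<times> 'a \<Rightarrow> real) \<Rightarrow> 'a \<Rightarrow> ennreal" where
  "inner_L2 D q x =
     (let I = (\<integral>\<^sup>+x'. ennreal ((q (x, x'))\<^sup>2) * indicator D x' \<partial>lebesgue)
      in if I = \<infinity> then \<infinity> else ennreal (sqrt (enn2real I)))"

definition mixed_norm :: "'a::euclidean_space set \<Rightarrow> ('a \<times> 'a \<Rightarrow> real) \<Rightarrow> ennreal" where
  "mixed_norm D q = (\<integral>\<^sup>+x. inner_L2 D q x * indicator D x \<partial>lebesgue)"

definition L12 :: "'a::euclidean_space set \<Rightarrow> ('a \<times> 'a \<Rightarrow> real) set" where
  "L12 D = {q. q \<in> borel_measurable borel \<and> mixed_norm D q < \<infinity>}"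

definition flux_recovery :: "'a::euclidean_space set \<Rightarrow> ('a \<Rightarrow> real) \<Rightarrow> ('a \<times> 'a \<Rightarrow> real) \<Rightarrow> 'a \<Rightarrow> 'a" where
  "flux_recovery D \<omega> q x = (\<integral>x'\<in>D. (q (x, x') * \<omega> (x - x')) *\<^sub>R (x - x') \<partial>lebesgue)"

end

theory Submission
  imports Defs
begin


lemma lebesgue_invariant:
  fixes S :: "'a::euclidean_space \<Rightarrow> 'a"
  assumes Sm: "S \<in> borel \<rightarrow>\<^sub>M borel" and D: "distr lborel borel S = lborel"
  shows "S \<in> lebesgue \<rightarrow>\<^sub>M lebesgue" "distr lebesgue lebesgue S = lebesgue"
proof -
  have S0: "S \<in> lborel \<rightarrow>\<^sub>M lborel" using Sm by simp
  have S1: "S \<in> lebesgue \<rightarrow>\<^sub>M lborel" using S0 by (rule measurable_completion)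
  have eq: "distr lebesgue lborel S = lborel"
  proof -
    have "distr lebesgue lborel S = distr lborel lborel S" by (rule distr_completion[OF S0])
    also have "\<dots> = distr lborel borel S" by (rule distr_cong) auto
    finally show ?thesis using D by simp
  qed
  show "S \<in> lebesgue \<rightarrow>\<^sub>M lebesgue"
    using completion.measurable_completion2[OF S1] eq by simp
  have "completion (distr lebesgue lborel S) = distr lebesgue (completion lborel) S"
    by (rule completion.completion_distr_eq[OF S1]) (simp add: eq)
  then show "distr lebesgue lebesgue S = lebesgue" by (simp add: eq)
qed

lemma distr_reflect_coord:
  fixes b :: "'a::euclidean_space"
  assumes b: "b \<in> Basis"
  shows "distr lborel borel (\<lambda>z. z - (2 * (z \<bullet> b)) *\<^sub>R b) = (lborel :: 'a measure)"
proof -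
  define c where "c = (\<lambda>j::'a. if j = b then -1 else (1::real))"
  have c: "\<And>j. j \<in> Basis \<Longrightarrow> c j \<noteq> 0" by (simp add: c_def)
  have T: "(\<lambda>x. 0 + (\<Sum>j\<in>Basis. (c j * (x \<bullet> j)) *\<^sub>R j)) = (\<lambda>z. z - (2 * (z \<bullet> b)) *\<^sub>R b)"
  proof
    fix x :: 'a
    show "0 + (\<Sum>j\<in>Basis. (c j * (x \<bullet> j)) *\<^sub>R j) = x - (2 * (x \<bullet> b)) *\<^sub>R b"
      by (rule euclidean_eqI) (auto simp: c_def inner_sum_left inner_Basis if_distrib inner_diff_left b
          sum.If_cases cong: if_cong)
  qed
  have P: "(\<Prod>j\<in>Basis. \<bar>c j\<bar>) = 1" by (rule prod.neutral) (simp add: c_def)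
  have "lborel = density (distr lborel borel (\<lambda>x. 0 + (\<Sum>j\<in>Basis. (c j * (x \<bullet> j)) *\<^sub>R j))) (\<lambda>_. (\<Prod>j\<in>Basis. \<bar>c j\<bar>))"
    by (rule lborel_affine_euclidean[OF c])
  then show ?thesis unfolding T P by (simp add: density_1)
qed

lemma distr_translate_reflect:
  fixes x :: "'a::euclidean_space"
  shows "distr lborel borel (\<lambda>y. x - y) = (lborel :: 'a measure)"
proof -
  have "lborel = density (distr lborel borel (\<lambda>y. x + (-1::real) *\<^sub>R y)) (\<lambda>_. \<bar>-1::real\<bar>^DIM('a))"
    by (rule lborel_affine) simp
  then show ?thesis by (simp add: density_1)
qed

definition swp :: "'a::euclidean_space \<Rightarrow> 'a \<Rightarrow> 'a \<Rightarrow> 'a" where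
  "swp b1 b2 i = (if i = b1 then b2 else if i = b2 then b1 else i)"

definition swap_map :: "'a::euclidean_space \<Rightarrow> 'a \<Rightarrow> 'a \<Rightarrow> 'a" where
  "swap_map b1 b2 z = (\<Sum>i\<in>Basis. (z \<bullet> swp b1 b2 i) *\<^sub>R i)"

lemma swp_Basis: "b1 \<in> Basis \<Longrightarrow> b2 \<in> Basis \<Longrightarrow> i \<in> Basis \<Longrightarrow> swp b1 b2 i \<in> Basis"
  by (simp add: swp_def)

lemma swp_swp[simp]: "swp b1 b2 (swp b1 b2 i) = i"
  by (simp add: swp_def)

lemma swap_map_inner[simp]: "i \<in> Basis \<Longrightarrow> swap_map b1 b2 z \<bullet> i = z \<bullet> swp b1 b2 i"
  by (simp add: swap_map_def inner_sum_left inner_Basis if_distrib cong: if_cong)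

lemma swp_bij: "b1 \<in> Basis \<Longrightarrow> b2 \<in> Basis \<Longrightarrow> bij_betw (swp b1 b2) Basis Basis"
  by (rule bij_betw_byWitness[where f'="swp b1 b2"]) (auto simp: swp_Basis)

lemma swap_map_norm:
  assumes "b1 \<in> Basis" "b2 \<in> Basis"
  shows "norm (swap_map b1 b2 z) = norm z"
proof -
  have "swap_map b1 b2 z \<bullet> swap_map b1 b2 z = (\<Sum>i\<in>Basis. (z \<bullet> swp b1 b2 i) * (z \<bullet> swp b1 b2 i))"
    by (subst euclidean_inner) simp
  also have "\<dots> = (\<Sum>i\<in>Basis. (z \<bullet> i) * (z \<bullet> i))"
    using sum.reindex_bij_betw[OF swp_bij[OF assms], of "\<lambda>i. (z \<bullet> i) * (z \<bullet> i)"] by simp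
  also have "\<dots> = z \<bullet> z" by (subst (2) euclidean_inner) simp
  finally show ?thesis by (simp add: norm_eq_sqrt_inner)
qed

lemma swap_map_borel[measurable]: "swap_map b1 b2 \<in> borel \<rightarrow>\<^sub>M borel"
  unfolding swap_map_def[abs_def] by measurable

lemma distr_swap:
  fixes b1 b2 :: "'a::euclidean_space"
  assumes b: "b1 \<in> Basis" "b2 \<in> Basis"
  shows "distr lborel borel (swap_map b1 b2) = (lborel :: 'a measure)"
proof (rule lborel_eqI[symmetric])
  fix l u :: 'a
  assume le: "\<And>b. b \<in> Basis \<Longrightarrow> l \<bullet> b \<le> u \<bullet> b"
  have pre: "swap_map b1 b2 -` box l u = box (swap_map b1 b2 l) (swap_map b1 b2 u)"
  proof (auto simp: mem_box)
    fix x i :: 'a assume H: "\<forall>i\<in>Basis. l \<bullet> i < x \<bullet> swp b1 b2 i \<and> x \<bullet> swp b1 b2 i < u \<bullet> i" and i: "i \<in> Basis"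
    from H[rule_format, OF swp_Basis[OF b i]] show "l \<bullet> swp b1 b2 i < x \<bullet> i" "x \<bullet> i < u \<bullet> swp b1 b2 i" by auto
  next
    fix x i :: 'a assume H: "\<forall>i\<in>Basis. l \<bullet> swp b1 b2 i < x \<bullet> i \<and> x \<bullet> i < u \<bullet> swp b1 b2 i" and i: "i \<in> Basis"
    from H[rule_format, OF swp_Basis[OF b i]] show "l \<bullet> i < x \<bullet> swp b1 b2 i" "x \<bullet> swp b1 b2 i < u \<bullet> i" by auto
  qed
  have le2: "\<forall>b\<in>Basis. swap_map b1 b2 l \<bullet> b \<le> swap_map b1 b2 u \<bullet> b"
    using le swp_Basis[OF b] by auto
  have "emeasure (distr lborel borel (swap_map b1 b2)) (box l u) = emeasure lborel (swap_map b1 b2 -` box l u)"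
    by (subst emeasure_distr) auto
  also have "\<dots> = (\<Prod>i\<in>Basis. (swap_map b1 b2 u - swap_map b1 b2 l) \<bullet> i)"
    unfolding pre using le2 by (simp add: emeasure_lborel_box_eq)
  also have "\<dots> = (\<Prod>i\<in>Basis. (u - l) \<bullet> swp b1 b2 i)"
    by (simp add: inner_diff_left)
  also have "\<dots> = (\<Prod>i\<in>Basis. (u - l) \<bullet> i)"
    using prod.reindex_bij_betw[OF swp_bij[OF b], of "\<lambda>i. (u - l) \<bullet> i"] by simp
  finally show "emeasure (distr lborel borel (swap_map b1 b2)) (box l u) = (\<Prod>i\<in>Basis. (u - l) \<bullet> i)" .
qed simp



lemma integral_invariant:
  fixes g :: "'a::euclidean_space \<Rightarrow> real" and S :: "'a \<Rightarrow> 'a"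
  assumes Sm: "S \<in> borel \<rightarrow>\<^sub>M borel" and D: "distr lborel borel S = lborel"
    and g: "g \<in> borel_measurable lebesgue"
  shows "(\<integral>z. g (S z) \<partial>lebesgue) = (\<integral>z. g z \<partial>lebesgue)"
proof -
  have "integral\<^sup>L (distr lebesgue lebesgue S) g = (\<integral>z. g (S z) \<partial>lebesgue)"
    by (rule integral_distr[OF lebesgue_invariant(1)[OF Sm D] g])
  then show ?thesis using lebesgue_invariant(2)[OF Sm D] by simp
qed

lemma nn_integral_invariant:
  fixes g :: "'a::euclidean_space \<Rightarrow> ennreal" and S :: "'a \<Rightarrow> 'a"
  assumes Sm: "S \<in> borel \<rightarrow>\<^sub>M borel" and D: "distr lborel borel S = lborel"
    and g: "g \<in> borel_measurable lebesgue"
  shows "(\<integral>\<^sup>+z. g (S z) \<partial>lebesgue) = (\<integral>\<^sup>+z. g z \<partial>lebesgue)"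
proof -
  have "integral\<^sup>N (distr lebesgue lebesgue S) g = (\<integral>\<^sup>+z. g (S z) \<partial>lebesgue)"
    by (rule nn_integral_distr[OF lebesgue_invariant(1)[OF Sm D]]) (simp add: lebesgue_invariant(2)[OF Sm D] g)
  then show ?thesis using lebesgue_invariant(2)[OF Sm D] by simp
qed

lemma lebesgue_of_borel: "f \<in> borel \<rightarrow>\<^sub>M N \<Longrightarrow> f \<in> (lebesgue :: 'a::euclidean_space measure) \<rightarrow>\<^sub>M N"
  by (rule measurable_completion) simp

lemma inner_lebesgue_meas[measurable]: "(\<lambda>z::'a::euclidean_space. z \<bullet> v) \<in> borel_measurable lebesgue"
  by (rule lebesgue_of_borel) simp

lemma norm_lebesgue_meas[measurable]: "(\<lambda>z::'a::euclidean_space. norm z) \<in> borel_measurable lebesgue"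
  by (rule lebesgue_of_borel) simp

lemma moment:
  fixes F :: "'a::euclidean_space \<Rightarrow> real"
  assumes Fm[measurable]: "F \<in> borel_measurable lebesgue"
    and rad: "\<And>z z'. norm z = norm z' \<Longrightarrow> F z = F z'"
    and int: "integrable lebesgue (\<lambda>z. F z * (norm z)\<^sup>2)"
  shows "(\<integral>z. F z * (z \<bullet> u)\<^sup>2 \<partial>lebesgue) = (u \<bullet> u) * (\<integral>z. F z * (norm z)\<^sup>2 \<partial>lebesgue) / DIM('a)"
proof -
  define m where "m v w = (\<integral>z. F z * ((z \<bullet> v) * (z \<bullet> w)) \<partial>lebesgue)" for v w
  have intvw: "integrable lebesgue (\<lambda>z. F z * ((z \<bullet> v) * (z \<bullet> w)))" for v w
  proof (rule Bochner_Integration.integrable_bound[OF integrable_mult_right[OF int, of "norm v * norm w"]])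
    show "(\<lambda>z. F z * ((z \<bullet> v) * (z \<bullet> w))) \<in> borel_measurable lebesgue" by measurable
    show "AE z in lebesgue. norm (F z * ((z \<bullet> v) * (z \<bullet> w))) \<le> norm (norm v * norm w * (F z * (norm z)\<^sup>2))"
    proof (rule AE_I2)
      fix z
      have "\<bar>z \<bullet> v\<bar> * \<bar>z \<bullet> w\<bar> \<le> (norm z * norm v) * (norm z * norm w)"
        by (intro mult_mono Cauchy_Schwarz_ineq2) auto
      then have "\<bar>F z\<bar> * (\<bar>z \<bullet> v\<bar> * \<bar>z \<bullet> w\<bar>) \<le> \<bar>F z\<bar> * ((norm z * norm v) * (norm z * norm w))"
        by (rule mult_left_mono) simp
      then show "norm (F z * ((z \<bullet> v) * (z \<bullet> w))) \<le> norm (norm v * norm w * (F z * (norm z)\<^sup>2))"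
        by (simp add: abs_mult power2_eq_square mult_ac)
    qed
  qed
  have off: "m b b' = 0" if b: "b \<in> Basis" "b' \<in> Basis" "b \<noteq> b'" for b b'
  proof -
    define S where "S z = z - (2 * (z \<bullet> b)) *\<^sub>R b" for z :: 'a
    have Sm: "S \<in> borel \<rightarrow>\<^sub>M borel" unfolding S_def[abs_def] by measurable
    have SD: "distr lborel borel S = lborel" unfolding S_def[abs_def] by (rule distr_reflect_coord[OF b(1)])
    have bb': "b \<bullet> b' = 0" using b by (simp add: inner_not_same_Basis)
    have Sb: "S z \<bullet> b = - (z \<bullet> b)" for z using b by (simp add: S_def inner_diff_left)
    have Sb': "S z \<bullet> b' = z \<bullet> b'" for z using bb' by (simp add: S_def inner_diff_left)
    have Sn: "norm (S z) = norm z" for z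
    proof -
      have "S z \<bullet> S z = z \<bullet> z"
        using b(1) by (simp add: S_def inner_diff_left inner_diff_right inner_commute[of b z] power2_eq_square)
      then show ?thesis by (simp add: norm_eq_sqrt_inner)
    qed
    have "m b b' = (\<integral>z. F (S z) * ((S z \<bullet> b) * (S z \<bullet> b')) \<partial>lebesgue)"
      unfolding m_def by (rule integral_invariant[OF Sm SD, symmetric]) measurable
    also have "\<dots> = (\<integral>z. - (F z * ((z \<bullet> b) * (z \<bullet> b'))) \<partial>lebesgue)"
      using rad[OF Sn] by (simp add: Sb Sb')
    also have "\<dots> = - m b b'" by (simp add: m_def)
    finally show ?thesis by simp
  qed
  obtain b0 :: 'a where b0: "b0 \<in> Basis" using nonempty_Basis by blast
  have diag: "m b b = m b0 b0" if b: "b \<in> Basis" for b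
  proof -
    define S where "S = swap_map b b0"
    have Sm: "S \<in> borel \<rightarrow>\<^sub>M borel" unfolding S_def by measurable
    have SD: "distr lborel borel S = lborel" unfolding S_def by (rule distr_swap[OF b b0])
    have Sb: "S z \<bullet> b = z \<bullet> b0" for z using b by (simp add: S_def swp_def)
    have Sn: "norm (S z) = norm z" for z unfolding S_def by (rule swap_map_norm[OF b b0])
    have "m b b = (\<integral>z. F (S z) * ((S z \<bullet> b) * (S z \<bullet> b)) \<partial>lebesgue)"
      unfolding m_def by (rule integral_invariant[OF Sm SD, symmetric]) measurable
    also have "\<dots> = m b0 b0"
      using rad[OF Sn] by (simp add: Sb m_def)
    finally show ?thesis .
  qed
  have "(\<integral>z. F z * (norm z)\<^sup>2 \<partial>lebesgue) = (\<integral>z. (\<Sum>b\<in>Basis. F z * ((z \<bullet> b) * (z \<bullet> b))) \<partial>lebesgue)"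
  proof (intro Bochner_Integration.integral_cong refl)
    fix z :: 'a
    show "F z * (norm z)\<^sup>2 = (\<Sum>b\<in>Basis. F z * ((z \<bullet> b) * (z \<bullet> b)))"
      by (simp only: power2_norm_eq_inner euclidean_inner[of z z] sum_distrib_left)
  qed
  also have "\<dots> = (\<Sum>b\<in>Basis. m b b)"
    unfolding m_def by (rule Bochner_Integration.integral_sum) (rule intvw)
  also have "\<dots> = (\<Sum>b\<in>(Basis::'a set). m b0 b0)"
    by (rule sum.cong[OF refl]) (rule diag)
  finally have tot: "(\<integral>z. F z * (norm z)\<^sup>2 \<partial>lebesgue) = DIM('a) * m b0 b0" by simp
  have "(\<integral>z. F z * (z \<bullet> u)\<^sup>2 \<partial>lebesgue)
      = (\<integral>z. (\<Sum>b\<in>Basis. \<Sum>b'\<in>Basis. ((u \<bullet> b) * (u \<bullet> b')) * (F z * ((z \<bullet> b) * (z \<bullet> b')))) \<partial>lebesgue)"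
  proof (intro Bochner_Integration.integral_cong refl)
    fix z :: 'a
    have "(z \<bullet> u)\<^sup>2 = (\<Sum>b\<in>Basis. (z \<bullet> b) * (u \<bullet> b)) * (\<Sum>b'\<in>Basis. (z \<bullet> b') * (u \<bullet> b'))"
      by (simp add: power2_eq_square euclidean_inner[of z u])
    also have "\<dots> = (\<Sum>b\<in>Basis. \<Sum>b'\<in>Basis. ((z \<bullet> b) * (u \<bullet> b)) * ((z \<bullet> b') * (u \<bullet> b')))"
      by (rule sum_product)
    finally show "F z * (z \<bullet> u)\<^sup>2 = (\<Sum>b\<in>Basis. \<Sum>b'\<in>Basis. ((u \<bullet> b) * (u \<bullet> b')) * (F z * ((z \<bullet> b) * (z \<bullet> b'))))"
      by (simp add: sum_distrib_left mult_ac)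
  qed
  also have "\<dots> = (\<Sum>b\<in>Basis. \<Sum>b'\<in>Basis. ((u \<bullet> b) * (u \<bullet> b')) * m b b')"
  proof -
    have I1: "integrable lebesgue (\<lambda>z. ((u \<bullet> b) * (u \<bullet> b')) * (F z * ((z \<bullet> b) * (z \<bullet> b'))))" for b b'
      by (rule integrable_mult_right) (rule intvw)
    have "(\<integral>z. (\<Sum>b\<in>Basis. \<Sum>b'\<in>Basis. ((u \<bullet> b) * (u \<bullet> b')) * (F z * ((z \<bullet> b) * (z \<bullet> b')))) \<partial>lebesgue)
       = (\<Sum>b\<in>Basis. (\<integral>z. (\<Sum>b'\<in>Basis. ((u \<bullet> b) * (u \<bullet> b')) * (F z * ((z \<bullet> b) * (z \<bullet> b')))) \<partial>lebesgue))"
      by (rule Bochner_Integration.integral_sum) (rule Bochner_Integration.integrable_sum, rule I1)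
    also have "\<dots> = (\<Sum>b\<in>Basis. \<Sum>b'\<in>Basis. (\<integral>z. ((u \<bullet> b) * (u \<bullet> b')) * (F z * ((z \<bullet> b) * (z \<bullet> b'))) \<partial>lebesgue))"
      by (rule sum.cong[OF refl]) (rule Bochner_Integration.integral_sum, rule I1)
    also have "\<dots> = (\<Sum>b\<in>Basis. \<Sum>b'\<in>Basis. ((u \<bullet> b) * (u \<bullet> b')) * m b b')"
      by (simp add: m_def)
    finally show ?thesis .
  qed
  also have "\<dots> = (\<Sum>b\<in>Basis. (u \<bullet> b) * (u \<bullet> b) * m b0 b0)"
  proof (rule sum.cong[OF refl])
    fix b assume b: "b \<in> (Basis::'a set)"
    have "(\<Sum>b'\<in>Basis. ((u \<bullet> b) * (u \<bullet> b')) * m b b') = (\<Sum>b'\<in>Basis. if b' = b then (u \<bullet> b) * (u \<bullet> b) * m b0 b0 else 0)"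
    proof (rule sum.cong[OF refl])
      fix b' assume b': "b' \<in> (Basis::'a set)"
      show "((u \<bullet> b) * (u \<bullet> b')) * m b b' = (if b' = b then (u \<bullet> b) * (u \<bullet> b) * m b0 b0 else 0)"
      proof (cases "b' = b")
        case True
        then show ?thesis using diag[OF b] by simp
      next
        case False
        then show ?thesis using off[OF b b'] by simp
      qed
    qed
    then show "(\<Sum>b'\<in>Basis. ((u \<bullet> b) * (u \<bullet> b')) * m b b') = (u \<bullet> b) * (u \<bullet> b) * m b0 b0"
      using b by simp
  qed
  also have "\<dots> = (u \<bullet> u) * m b0 b0"
    by (simp add: euclidean_inner[of u u] sum_distrib_right)
  finally show ?thesis using tot by simp
qed



lemma K2_val:
  fixes e :: "'a::euclidean_space"
  assumes e: "norm e = 1"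
  shows "K2 e = 1 / DIM('a)"
proof -
  define F where "F z = indicator (ball (0::'a) 1) z / (norm z)\<^sup>2" for z :: 'a
  define M where "M = measure lebesgue (ball (0::'a) 1)"
  have [measurable]: "ball (0::'a) 1 \<in> sets borel" by simp
  have [measurable]: "(\<lambda>x::'a. (norm x)\<^sup>2) \<in> borel_measurable borel"
    by (intro borel_measurable_continuous_onI continuous_intros)
  have Fm: "F \<in> borel_measurable lebesgue" unfolding F_def[abs_def]
    by (rule lebesgue_of_borel) measurable
  have rad: "F z = F z'" if "norm z = norm z'" for z z'
    using that by (simp add: F_def indicator_def)
  have FN: "F z * (norm z)\<^sup>2 = indicator (ball 0 1 - {0}) z" for z
    by (cases "z = 0") (auto simp: F_def indicator_def)
  have fm: "ball (0::'a) 1 - {0} \<in> fmeasurable lebesgue"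
    by (rule fmeasurable_Diff) auto
  have int: "integrable lebesgue (\<lambda>z. F z * (norm z)\<^sup>2)"
    unfolding FN using fm by (auto simp: fmeasurable_def)
  have null0: "{0::'a} \<in> null_sets lebesgue"
    using negligible_iff_null_sets negligible_sing by blast
  have intN: "(\<integral>z. F z * (norm z)\<^sup>2 \<partial>lebesgue) = M"
  proof -
    have md: "measure lebesgue (ball (0::'a) 1 - {0}) = M"
      unfolding M_def by (rule measure_Diff_null_set[OF _ null0]) simp
    show ?thesis unfolding FN using md by simp
  qed
  have Mpos: "M > 0"
    unfolding M_def using content_ball_pos[of 1 "0::'a"] by simp
  have mom: "(\<integral>z. F z * (z \<bullet> e)\<^sup>2 \<partial>lebesgue) = M / DIM('a)"
    using moment[OF Fm rad int, of e] e intN by (simp add: norm_eq_1)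
  have "(\<integral>x\<in>ball 0 1. \<bar>(x /\<^sub>R norm x) \<bullet> e\<bar> ^ 2 \<partial>lebesgue) = (\<integral>z. F z * (z \<bullet> e)\<^sup>2 \<partial>lebesgue)"
    unfolding set_lebesgue_integral_def
    by (intro Bochner_Integration.integral_cong refl)
       (simp add: F_def indicator_def power2_eq_square divide_inverse mult_ac)
  then show ?thesis
    unfolding K2_def sphere_avg_def using mom Mpos by (simp add: M_def)
qed

lemma omega_moment:
  fixes \<omega> :: "'a::euclidean_space \<Rightarrow> real" and e u :: 'a
  assumes e_unit: "norm e = 1" and u: "norm u = 1"
    and \<omega>_meas[measurable]: "\<omega> \<in> borel_measurable lebesgue"
    and \<omega>_radial: "\<And>z z'. norm z = norm z' \<Longrightarrow> \<omega> z = \<omega> z'"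
    and \<omega>_norm: "(\<integral>\<^sup>+z. ennreal ((norm z)\<^sup>2 * (\<omega> z)\<^sup>2) \<partial>lebesgue) = ennreal (1 / K2 e)"
  shows "(\<integral>\<^sup>+z. ennreal ((\<omega> z)\<^sup>2 * (z \<bullet> u)\<^sup>2) \<partial>lebesgue) = 1"
proof -
  have K: "1 / K2 e = DIM('a)" using K2_val[OF e_unit] by simp
  have nn: "(\<integral>\<^sup>+z. ennreal ((\<omega> z)\<^sup>2 * (norm z)\<^sup>2) \<partial>lebesgue) = ennreal (DIM('a))"
    using \<omega>_norm K by (simp add: mult.commute)
  have int: "integrable lebesgue (\<lambda>z. (\<omega> z)\<^sup>2 * (norm z)\<^sup>2)"
    by (rule integrableI_nn_integral_finite[OF _ _ nn]) auto
  have "ennreal (\<integral>z. (\<omega> z)\<^sup>2 * (norm z)\<^sup>2 \<partial>lebesgue) = ennreal (DIM('a))"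
    using nn nn_integral_eq_integral[OF int] by simp
  then have intv: "(\<integral>z. (\<omega> z)\<^sup>2 * (norm z)\<^sup>2 \<partial>lebesgue) = DIM('a)"
    by (subst (asm) ennreal_inj) (auto intro!: integral_nonneg_AE)
  have rad: "(\<omega> z)\<^sup>2 = (\<omega> z')\<^sup>2" if "norm z = norm z'" for z z'
    using \<omega>_radial[OF that] by simp
  have mom: "(\<integral>z. (\<omega> z)\<^sup>2 * (z \<bullet> u)\<^sup>2 \<partial>lebesgue) = 1"
    using moment[of "\<lambda>z. (\<omega> z)\<^sup>2", OF _ rad int, of u] intv u by (simp add: norm_eq_1)
  have int2: "integrable lebesgue (\<lambda>z. (\<omega> z)\<^sup>2 * (z \<bullet> u)\<^sup>2)"
  proof (rule Bochner_Integration.integrable_bound[OF int])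
    show "(\<lambda>z. (\<omega> z)\<^sup>2 * (z \<bullet> u)\<^sup>2) \<in> borel_measurable lebesgue" by measurable
    show "AE z in lebesgue. norm ((\<omega> z)\<^sup>2 * (z \<bullet> u)\<^sup>2) \<le> norm ((\<omega> z)\<^sup>2 * (norm z)\<^sup>2)"
    proof (rule AE_I2)
      fix z
      have "\<bar>z \<bullet> u\<bar> \<le> norm z" using Cauchy_Schwarz_ineq2[of z u] u by simp
      then have "(z \<bullet> u)\<^sup>2 \<le> (norm z)\<^sup>2"
        by (metis abs_ge_zero power2_abs power_mono)
      then show "norm ((\<omega> z)\<^sup>2 * (z \<bullet> u)\<^sup>2) \<le> norm ((\<omega> z)\<^sup>2 * (norm z)\<^sup>2)"
        by (simp add: abs_mult mult_left_mono)
    qed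
  qed
  show ?thesis
    using nn_integral_eq_integral[OF int2] mom by simp
qed



lemma abs_mult_le_sq: "\<bar>p * q\<bar> \<le> (p::real)\<^sup>2 + q\<^sup>2"
proof -
  have "0 \<le> (\<bar>p\<bar> - \<bar>q\<bar>)\<^sup>2" by simp
  moreover have "(\<bar>p\<bar> - \<bar>q\<bar>)\<^sup>2 = p\<^sup>2 + q\<^sup>2 - 2 * \<bar>p * q\<bar>"
    by (simp add: power2_eq_square abs_mult algebra_simps)
  moreover have "\<bar>p * q\<bar> \<ge> 0" by simp
  ultimately show ?thesis by linarith
qed

lemma CS_real:
  fixes a b :: "'x \<Rightarrow> real"
  assumes [measurable]: "a \<in> borel_measurable M" "b \<in> borel_measurable M"
    and ia: "integrable M (\<lambda>x. (a x)\<^sup>2)" and ib: "integrable M (\<lambda>x. (b x)\<^sup>2)"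
  shows "integrable M (\<lambda>x. a x * b x)"
    and "(\<integral>x. a x * b x \<partial>M) \<le> sqrt (\<integral>x. (a x)\<^sup>2 \<partial>M) * sqrt (\<integral>x. (b x)\<^sup>2 \<partial>M)"
proof -
  have iab2: "integrable M (\<lambda>x. (a x)\<^sup>2 + (b x)\<^sup>2)" using ia ib by simp
  show iab: "integrable M (\<lambda>x. a x * b x)"
    by (rule Bochner_Integration.integrable_bound[OF iab2])
       (auto intro!: AE_I2 simp: abs_mult_le_sq)
  then have iabs: "integrable M (\<lambda>x. \<bar>a x * b x\<bar>)" by simp
  define P where "P = (\<integral>x. \<bar>a x * b x\<bar> \<partial>M)"
  define A where "A = (\<integral>x. (a x)\<^sup>2 \<partial>M)"
  define B where "B = (\<integral>x. (b x)\<^sup>2 \<partial>M)"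
  have A0: "A \<ge> 0" unfolding A_def by (rule integral_nonneg_AE) auto
  have B0: "B \<ge> 0" unfolding B_def by (rule integral_nonneg_AE) auto
  have P0: "P \<ge> 0" unfolding P_def by (rule integral_nonneg_AE) auto
  have le1: "(\<integral>x. a x * b x \<partial>M) \<le> P"
    unfolding P_def by (rule integral_mono[OF iab iabs]) simp
  have CS: "(\<integral>\<^sup>+x. ennreal \<bar>a x\<bar> * ennreal \<bar>b x\<bar> \<partial>M)\<^sup>2
      \<le> (\<integral>\<^sup>+x. (ennreal \<bar>a x\<bar>) ^ 2 \<partial>M) * (\<integral>\<^sup>+x. (ennreal \<bar>b x\<bar>) ^ 2 \<partial>M)"
    by (rule Cauchy_Schwarz_nn_integral) auto
  have e1: "(\<integral>\<^sup>+x. ennreal \<bar>a x\<bar> * ennreal \<bar>b x\<bar> \<partial>M) = ennreal P"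
  proof -
    have "(\<integral>\<^sup>+x. ennreal \<bar>a x\<bar> * ennreal \<bar>b x\<bar> \<partial>M) = (\<integral>\<^sup>+x. ennreal \<bar>a x * b x\<bar> \<partial>M)"
      by (simp add: abs_mult ennreal_mult)
    also have "\<dots> = ennreal P" unfolding P_def by (rule nn_integral_eq_integral[OF iabs]) auto
    finally show ?thesis .
  qed
  have e2: "(\<integral>\<^sup>+x. (ennreal \<bar>a x\<bar>) ^ 2 \<partial>M) = ennreal A"
  proof -
    have "(\<integral>\<^sup>+x. (ennreal \<bar>a x\<bar>) ^ 2 \<partial>M) = (\<integral>\<^sup>+x. ennreal ((a x)\<^sup>2) \<partial>M)"
      by (simp add: ennreal_power)
    also have "\<dots> = ennreal A" unfolding A_def by (rule nn_integral_eq_integral[OF ia]) auto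
    finally show ?thesis .
  qed
  have e3: "(\<integral>\<^sup>+x. (ennreal \<bar>b x\<bar>) ^ 2 \<partial>M) = ennreal B"
  proof -
    have "(\<integral>\<^sup>+x. (ennreal \<bar>b x\<bar>) ^ 2 \<partial>M) = (\<integral>\<^sup>+x. ennreal ((b x)\<^sup>2) \<partial>M)"
      by (simp add: ennreal_power)
    also have "\<dots> = ennreal B" unfolding B_def by (rule nn_integral_eq_integral[OF ib]) auto
    finally show ?thesis .
  qed
  have "ennreal (P\<^sup>2) \<le> ennreal (A * B)"
    using CS unfolding e1 e2 e3 using P0 A0 B0 by (simp add: ennreal_power ennreal_mult)
  then have "P\<^sup>2 \<le> A * B" using A0 B0 by (simp add: ennreal_le_iff)
  then have "P \<le> sqrt (A * B)" using P0 by (simp add: real_le_rsqrt)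
  then show "(\<integral>x. a x * b x \<partial>M) \<le> sqrt (\<integral>x. (a x)\<^sup>2 \<partial>M) * sqrt (\<integral>x. (b x)\<^sup>2 \<partial>M)"
    using le1 unfolding A_def B_def by (simp add: real_sqrt_mult)
qed



lemma flux_pointwise:
  fixes \<omega> :: "'a::euclidean_space \<Rightarrow> real" and e :: 'a and D :: "'a set" and f :: "'a \<Rightarrow> real" and x :: 'a
  assumes e_unit: "norm e = 1"
    and \<omega>_meas[measurable]: "\<omega> \<in> borel_measurable lebesgue"
    and \<omega>_radial: "\<And>z z'. norm z = norm z' \<Longrightarrow> \<omega> z = \<omega> z'"
    and \<omega>_norm: "(\<integral>\<^sup>+z. ennreal ((norm z)\<^sup>2 * (\<omega> z)\<^sup>2) \<partial>lebesgue) = ennreal (1 / K2 e)"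
    and Dm[measurable]: "D \<in> sets lebesgue"
    and fm[measurable]: "f \<in> borel_measurable lebesgue"
    and J: "(\<integral>\<^sup>+x'. ennreal ((f x')\<^sup>2) * indicator D x' \<partial>lebesgue) \<noteq> \<infinity>"
  shows "set_integrable lebesgue D (\<lambda>x'. (f x' * \<omega> (x - x')) *\<^sub>R (x - x'))"
    and "norm (\<integral>x'\<in>D. (f x' * \<omega> (x - x')) *\<^sub>R (x - x') \<partial>lebesgue)
           \<le> sqrt (enn2real (\<integral>\<^sup>+x'. ennreal ((f x')\<^sup>2) * indicator D x' \<partial>lebesgue))"
proof -
  define Jv where "Jv = (\<integral>\<^sup>+x'. ennreal ((f x')\<^sup>2) * indicator D x' \<partial>lebesgue)"
  define a where "a x' = indicator D x' * f x'" for x'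
  define S where "S y = x - y" for y :: 'a
  have Sm: "S \<in> borel \<rightarrow>\<^sub>M borel" unfolding S_def[abs_def] by measurable
  have SD: "distr lborel borel S = lborel" unfolding S_def[abs_def] by (rule distr_translate_reflect)
  have SL[measurable]: "S \<in> lebesgue \<rightarrow>\<^sub>M lebesgue" by (rule lebesgue_invariant(1)[OF Sm SD])
  have wS[measurable]: "(\<lambda>x'. \<omega> (x - x')) \<in> borel_measurable lebesgue"
    using measurable_compose[OF SL \<omega>_meas] by (simp add: S_def o_def)
  have dS[measurable]: "(\<lambda>x'. x - x') \<in> borel_measurable lebesgue"
    by (rule lebesgue_of_borel) simp
  have am[measurable]: "a \<in> borel_measurable lebesgue" unfolding a_def[abs_def] by measurable
  have a2: "(\<integral>\<^sup>+x'. ennreal ((a x')\<^sup>2) \<partial>lebesgue) = ennreal (enn2real Jv)"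
  proof -
    have "(\<integral>\<^sup>+x'. ennreal ((a x')\<^sup>2) \<partial>lebesgue) = Jv"
      unfolding Jv_def by (intro nn_integral_cong) (simp add: a_def indicator_def power_mult_distrib)
    then show ?thesis using J unfolding Jv_def by (simp add: ennreal_enn2real_if)
  qed
  have ia: "integrable lebesgue (\<lambda>x'. (a x')\<^sup>2)"
    by (rule integrableI_nn_integral_finite[OF _ _ a2]) auto
  have A: "(\<integral>x'. (a x')\<^sup>2 \<partial>lebesgue) = enn2real Jv"
  proof -
    have "ennreal (\<integral>x'. (a x')\<^sup>2 \<partial>lebesgue) = ennreal (enn2real Jv)"
      using nn_integral_eq_integral[OF ia] a2 by simp
    then show ?thesis
      by (subst (asm) ennreal_inj) (auto intro!: integral_nonneg_AE)
  qed
  have trans: "(\<integral>\<^sup>+x'. g (x - x') \<partial>lebesgue) = (\<integral>\<^sup>+z. g z \<partial>lebesgue)"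
    if g[measurable]: "g \<in> borel_measurable lebesgue" for g :: "'a \<Rightarrow> ennreal"
    using nn_integral_invariant[OF Sm SD g] by (simp add: S_def)
  define bn where "bn x' = \<omega> (x - x') * norm (x - x')" for x'
  have bnm[measurable]: "bn \<in> borel_measurable lebesgue" unfolding bn_def[abs_def] by measurable
  have ibn: "integrable lebesgue (\<lambda>x'. (bn x')\<^sup>2)"
  proof (rule integrableI_nn_integral_finite[where x="1 / K2 e"])
    have "(\<integral>\<^sup>+x'. ennreal ((bn x')\<^sup>2) \<partial>lebesgue) = (\<integral>\<^sup>+x'. ennreal ((norm (x - x'))\<^sup>2 * (\<omega> (x - x'))\<^sup>2) \<partial>lebesgue)"
      by (simp add: bn_def power_mult_distrib mult.commute)
    also have "\<dots> = ennreal (1 / K2 e)"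
      using trans[of "\<lambda>z. ennreal ((norm z)\<^sup>2 * (\<omega> z)\<^sup>2)"] \<omega>_norm by simp
    finally show "(\<integral>\<^sup>+x'. ennreal ((bn x')\<^sup>2) \<partial>lebesgue) = ennreal (1 / K2 e)" .
  qed auto
  define g where "g x' = indicator D x' *\<^sub>R ((f x' * \<omega> (x - x')) *\<^sub>R (x - x'))" for x'
  have gm[measurable]: "g \<in> borel_measurable lebesgue" unfolding g_def[abs_def] by measurable
  have ig: "integrable lebesgue g"
  proof (rule Bochner_Integration.integrable_bound[OF CS_real(1)[OF am bnm ia ibn] gm])
    show "AE x' in lebesgue. norm (g x') \<le> norm (a x' * bn x')"
      by (rule AE_I2) (simp add: g_def a_def bn_def indicator_def abs_mult)
  qed
  then show "set_integrable lebesgue D (\<lambda>x'. (f x' * \<omega> (x - x')) *\<^sub>R (x - x'))"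
    unfolding set_integrable_def g_def .
  define v where "v = (\<integral>x'. g x' \<partial>lebesgue)"
  have vdef: "(\<integral>x'\<in>D. (f x' * \<omega> (x - x')) *\<^sub>R (x - x') \<partial>lebesgue) = v"
    unfolding set_lebesgue_integral_def v_def g_def ..
  show "norm (\<integral>x'\<in>D. (f x' * \<omega> (x - x')) *\<^sub>R (x - x') \<partial>lebesgue)
           \<le> sqrt (enn2real (\<integral>\<^sup>+x'. ennreal ((f x')\<^sup>2) * indicator D x' \<partial>lebesgue))"
  proof (cases "v = 0")
    case True
    then show ?thesis unfolding vdef by simp
  next
    case False
    define u where "u = v /\<^sub>R norm v"
    have u1: "norm u = 1" using False by (simp add: u_def)
    define bu where "bu x' = \<omega> (x - x') * ((x - x') \<bullet> u)" for x'
    have bum[measurable]: "bu \<in> borel_measurable lebesgue" unfolding bu_def[abs_def] by measurable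
    have bu2: "(\<integral>\<^sup>+x'. ennreal ((bu x')\<^sup>2) \<partial>lebesgue) = ennreal 1"
    proof -
      have "(\<integral>\<^sup>+x'. ennreal ((bu x')\<^sup>2) \<partial>lebesgue) = (\<integral>\<^sup>+x'. ennreal ((\<omega> (x - x'))\<^sup>2 * ((x - x') \<bullet> u)\<^sup>2) \<partial>lebesgue)"
        by (simp add: bu_def power_mult_distrib)
      also have "\<dots> = (\<integral>\<^sup>+z. ennreal ((\<omega> z)\<^sup>2 * (z \<bullet> u)\<^sup>2) \<partial>lebesgue)"
        by (rule trans) measurable
      also have "\<dots> = 1"
        by (rule omega_moment[OF e_unit u1 \<omega>_meas \<omega>_radial \<omega>_norm])
      finally show ?thesis by simp
    qed
    have ibu: "integrable lebesgue (\<lambda>x'. (bu x')\<^sup>2)"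
      by (rule integrableI_nn_integral_finite[OF _ _ bu2]) auto
    have B: "(\<integral>x'. (bu x')\<^sup>2 \<partial>lebesgue) = 1"
    proof -
      have "ennreal (\<integral>x'. (bu x')\<^sup>2 \<partial>lebesgue) = ennreal 1"
        using nn_integral_eq_integral[OF ibu] bu2 by simp
      then show ?thesis
        by (subst (asm) ennreal_inj) (auto intro!: integral_nonneg_AE)
    qed
    have "norm v = v \<bullet> u"
      using False by (simp add: u_def inner_commute power2_norm_eq_inner[symmetric] power2_eq_square)
    also have "\<dots> = (\<integral>x'. g x' \<bullet> u \<partial>lebesgue)"
      unfolding v_def by (rule integral_inner_left[symmetric]) (rule ig)
    also have "\<dots> = (\<integral>x'. a x' * bu x' \<partial>lebesgue)"
      by (intro Bochner_Integration.integral_cong refl) (simp add: g_def a_def bu_def)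
    also have "\<dots> \<le> sqrt (\<integral>x'. (a x')\<^sup>2 \<partial>lebesgue) * sqrt (\<integral>x'. (bu x')\<^sup>2 \<partial>lebesgue)"
      by (rule CS_real(2)[OF am bum ia ibu])
    also have "\<dots> = sqrt (enn2real Jv)" using A B by simp
    finally show ?thesis unfolding vdef Jv_def .
  qed
qed



lemma flux_measurable:
  fixes \<omega> :: "'a::euclidean_space \<Rightarrow> real" and D :: "'a set" and q :: "'a \<times> 'a \<Rightarrow> real"
  assumes \<omega>_meas[measurable]: "\<omega> \<in> borel_measurable lebesgue"
    and Db[measurable]: "D \<in> sets borel"
    and qm[measurable]: "q \<in> borel_measurable borel"
  shows "flux_recovery D \<omega> q \<in> borel_measurable lebesgue"
proof -
  obtain \<omega>' where w'm: "\<omega>' \<in> borel_measurable lborel" and ae: "AE z in lborel. \<omega> z = \<omega>' z"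
    using completion_ex_borel_measurable_real[OF \<omega>_meas] by blast
  have w'b[measurable]: "\<omega>' \<in> borel_measurable borel" using w'm by simp
  obtain N where N: "{z \<in> space lborel. \<not> \<omega> z = \<omega>' z} \<subseteq> N" "emeasure lborel N = 0" "N \<in> sets lborel"
    using ae by (rule AE_E)
  have Nb[measurable]: "N \<in> sets borel" using N(3) by simp
  have qP[measurable]: "q \<in> borel_measurable (lborel \<Otimes>\<^sub>M lborel)"
    by (simp add: lborel_prod)
  define G where "G x x' = indicator D x' *\<^sub>R ((q (x, x') * \<omega>' (x - x')) *\<^sub>R (x - x'))" for x x'
  have Gm: "case_prod G \<in> borel_measurable (lborel \<Otimes>\<^sub>M lborel)"
    unfolding G_def by measurable
  have eq: "flux_recovery D \<omega> q x = (\<integral>x'. G x x' \<partial>lborel)" for x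
  proof -
    define S where "S y = x - y" for y :: 'a
    have Sm: "S \<in> borel \<rightarrow>\<^sub>M borel" unfolding S_def[abs_def] by measurable
    have SD: "distr lborel borel S = lborel" unfolding S_def[abs_def] by (rule distr_translate_reflect)
    have SL[measurable]: "S \<in> lebesgue \<rightarrow>\<^sub>M lebesgue" by (rule lebesgue_invariant(1)[OF Sm SD])
    have wS[measurable]: "(\<lambda>x'. \<omega> (x - x')) \<in> borel_measurable lebesgue"
      using measurable_compose[OF SL \<omega>_meas] by (simp add: S_def o_def)
    have "AE z in lborel. z \<notin> N" using N(2,3) by (intro AE_not_in) auto
    then have "AE z in distr lborel borel S. z \<notin> N" by (simp only: SD)
    moreover have Sm': "S \<in> measurable lborel borel" using Sm by simp
    moreover have Pm: "{z \<in> space borel. z \<notin> N} \<in> sets borel" by measurable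
    ultimately have "AE x' in lborel. S x' \<notin> N"
      using AE_distr_iff[OF Sm' Pm] by simp
    then have "AE x' in lebesgue. S x' \<notin> N" by (rule AE_completion)
    then have ae2: "AE x' in lebesgue. \<omega> (x - x') = \<omega>' (x - x')"
      by eventually_elim (use N(1) in \<open>auto simp: S_def\<close>)
    have Gx: "G x \<in> borel_measurable lborel" unfolding G_def by measurable
    have "flux_recovery D \<omega> q x = (\<integral>x'. indicator D x' *\<^sub>R ((q (x, x') * \<omega> (x - x')) *\<^sub>R (x - x')) \<partial>lebesgue)"
      unfolding flux_recovery_def set_lebesgue_integral_def ..
    also have "\<dots> = (\<integral>x'. G x x' \<partial>lebesgue)"
    proof (rule integral_cong_AE)
      show "(\<lambda>x'. indicator D x' *\<^sub>R ((q (x, x') * \<omega> (x - x')) *\<^sub>R (x - x'))) \<in> borel_measurable lebesgue"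
      proof -
        have [measurable]: "(\<lambda>x'. x - x') \<in> borel_measurable lebesgue"
          by (rule lebesgue_of_borel) simp
        have [measurable]: "(\<lambda>x'. q (x, x')) \<in> borel_measurable lebesgue"
          by (rule lebesgue_of_borel) simp
        have [measurable]: "D \<in> sets lebesgue" by simp
        show ?thesis by measurable
      qed
      show "G x \<in> borel_measurable lebesgue" using Gx by (rule measurable_completion)
      show "AE x' in lebesgue. indicator D x' *\<^sub>R ((q (x, x') * \<omega> (x - x')) *\<^sub>R (x - x')) = G x x'"
        using ae2 by eventually_elim (simp add: G_def)
    qed
    also have "\<dots> = (\<integral>x'. G x x' \<partial>lborel)"
      by (rule integral_completion[OF Gx])
    finally show ?thesis .
  qed
  have "(\<lambda>x. \<integral>x'. G x x' \<partial>lborel) \<in> borel_measurable lborel"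
    by (rule lborel.borel_measurable_lebesgue_integral[OF Gm])
  then have "(\<lambda>x. \<integral>x'. G x x' \<partial>lborel) \<in> borel_measurable lebesgue"
    by (rule measurable_completion)
  moreover have E: "flux_recovery D \<omega> q = (\<lambda>x. \<integral>x'. G x x' \<partial>lborel)"
    by (rule ext) (rule eq)
  ultimately show ?thesis by (simp only: E)
qed



lemma I_measurable:
  fixes D :: "'a::euclidean_space set" and q :: "'a \<times> 'a \<Rightarrow> real"
  assumes Db[measurable]: "D \<in> sets borel" and qm[measurable]: "q \<in> borel_measurable borel"
  shows "(\<lambda>x. \<integral>\<^sup>+x'. ennreal ((q (x, x'))\<^sup>2) * indicator D x' \<partial>lebesgue) \<in> borel_measurable lebesgue"
proof -
  have qP[measurable]: "q \<in> borel_measurable (lborel \<Otimes>\<^sub>M lborel)"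
    by (simp add: lborel_prod)
  have "(\<lambda>x. \<integral>\<^sup>+x'. ennreal ((q (x, x'))\<^sup>2) * indicator D x' \<partial>lborel) \<in> borel_measurable lborel"
    by (rule lborel.borel_measurable_nn_integral) measurable
  then have "(\<lambda>x. \<integral>\<^sup>+x'. ennreal ((q (x, x'))\<^sup>2) * indicator D x' \<partial>lborel) \<in> borel_measurable lebesgue"
    by (rule measurable_completion)
  then show ?thesis by (simp only: nn_integral_completion)
qed

lemma inner_L2_measurable:
  fixes D :: "'a::euclidean_space set" and q :: "'a \<times> 'a \<Rightarrow> real"
  assumes Db[measurable]: "D \<in> sets borel" and qm[measurable]: "q \<in> borel_measurable borel"
  shows "(\<lambda>x. inner_L2 D q x * indicator D x) \<in> borel_measurable lebesgue"
proof -
  define I where "I x = (\<integral>\<^sup>+x'. ennreal ((q (x, x'))\<^sup>2) * indicator D x' \<partial>lebesgue)" for x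
  have Im[measurable]: "I \<in> borel_measurable lebesgue"
    unfolding I_def[abs_def] by (rule I_measurable[OF Db qm])
  define h where "h y = (if y = \<infinity> then \<infinity> else ennreal (sqrt (enn2real y)))" for y :: ennreal
  have hm[measurable]: "h \<in> borel_measurable borel" unfolding h_def[abs_def] by measurable
  have eq: "inner_L2 D q x = h (I x)" for x
    unfolding inner_L2_def I_def h_def Let_def ..
  have [measurable]: "D \<in> sets lebesgue" by simp
  show ?thesis unfolding eq by measurable
qed



lemma main_result:
  fixes \<omega> :: "'a::euclidean_space \<Rightarrow> real" and e :: 'a and D :: "'a set"
  assumes e_unit: "norm e = 1"
    and \<omega>_meas[measurable]: "\<omega> \<in> borel_measurable lebesgue"
    and \<omega>_radial: "\<And>z z'. norm z = norm z' \<Longrightarrow> \<omega> z = \<omega> z'"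
    and \<omega>_norm: "(\<integral>\<^sup>+z. ennreal ((norm z)\<^sup>2 * (\<omega> z)\<^sup>2) \<partial>lebesgue) = ennreal (1 / K2 e)"
    and Db[measurable]: "D \<in> sets borel"
  shows
    "(\<forall>q\<in>L12 D.
        (AE x in lebesgue. x \<in> D \<longrightarrow>
           set_integrable lebesgue D (\<lambda>x'. (q (x, x') * \<omega> (x - x')) *\<^sub>R (x - x'))) \<and>
        set_integrable lebesgue D (flux_recovery D \<omega> q) \<and>
        ennreal (\<integral>x\<in>D. norm (flux_recovery D \<omega> q x) \<partial>lebesgue)
          \<le> mixed_norm D q)
     \<and> (\<forall>q1\<in>L12 D. \<forall>q2\<in>L12 D. \<forall>a b::real.
          AE x in lebesgue. x \<in> D \<longrightarrow>
            flux_recovery D \<omega> (\<lambda>p. a * q1 p + b * q2 p) x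
              = a *\<^sub>R flux_recovery D \<omega> q1 x + b *\<^sub>R flux_recovery D \<omega> q2 x)"
proof -
  have Dl[measurable]: "D \<in> sets lebesgue" by simp
  define I where "I q x = (\<integral>\<^sup>+x'. ennreal ((q (x, x'))\<^sup>2) * indicator D x' \<partial>lebesgue)"
    for q :: "'a \<times> 'a \<Rightarrow> real" and x
  have qx_meas: "(\<lambda>x'. q (x, x')) \<in> borel_measurable lebesgue" if "q \<in> L12 D" for q x
  proof -
    have [measurable]: "q \<in> borel_measurable borel" using that by (simp add: L12_def)
    show ?thesis by (rule lebesgue_of_borel) simp
  qed
  have pw: "set_integrable lebesgue D (\<lambda>x'. (q (x, x') * \<omega> (x - x')) *\<^sub>R (x - x'))"
     "norm (flux_recovery D \<omega> q x) \<le> sqrt (enn2real (I q x))"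
    if "q \<in> L12 D" "I q x \<noteq> \<infinity>" for q x
    using flux_pointwise[OF e_unit \<omega>_meas \<omega>_radial \<omega>_norm Dl qx_meas[OF that(1)], of x] that(2)
    unfolding I_def flux_recovery_def by auto
  have Ifin: "AE x in lebesgue. x \<in> D \<longrightarrow> I q x \<noteq> \<infinity>" if q: "q \<in> L12 D" for q
  proof -
    have qm: "q \<in> borel_measurable borel" and fin: "mixed_norm D q < \<infinity>" using q by (auto simp: L12_def)
    have "AE x in lebesgue. inner_L2 D q x * indicator D x \<noteq> \<infinity>"
      by (rule nn_integral_PInf_AE[OF inner_L2_measurable[OF Db qm]]) (use fin in \<open>simp add: mixed_norm_def\<close>)
    then show ?thesis
      by eventually_elim (auto simp: inner_L2_def I_def Let_def split: if_splits)
  qed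
  have bound: "ennreal (norm (flux_recovery D \<omega> q x)) \<le> inner_L2 D q x" if q: "q \<in> L12 D" for q x
  proof (cases "I q x = \<infinity>")
    case True
    then show ?thesis by (simp add: inner_L2_def I_def[symmetric] Let_def)
  next
    case False
    have "inner_L2 D q x = ennreal (sqrt (enn2real (I q x)))"
      using False by (simp add: inner_L2_def I_def[symmetric] Let_def)
    then show ?thesis using pw(2)[OF q False] by (simp add: ennreal_leI)
  qed
  have part1: "(AE x in lebesgue. x \<in> D \<longrightarrow>
           set_integrable lebesgue D (\<lambda>x'. (q (x, x') * \<omega> (x - x')) *\<^sub>R (x - x'))) \<and>
        set_integrable lebesgue D (flux_recovery D \<omega> q) \<and>
        ennreal (\<integral>x\<in>D. norm (flux_recovery D \<omega> q x) \<partial>lebesgue) \<le> mixed_norm D q"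
    if q: "q \<in> L12 D" for q
  proof (intro conjI)
    have qm[measurable]: "q \<in> borel_measurable borel" and fin: "mixed_norm D q < \<infinity>"
      using q by (auto simp: L12_def)
    show "AE x in lebesgue. x \<in> D \<longrightarrow> set_integrable lebesgue D (\<lambda>x'. (q (x, x') * \<omega> (x - x')) *\<^sub>R (x - x'))"
      using Ifin[OF q] by eventually_elim (auto intro: pw(1)[OF q])
    have Rm[measurable]: "flux_recovery D \<omega> q \<in> borel_measurable lebesgue"
      by (rule flux_measurable[OF \<omega>_meas Db qm])
    have nnle: "(\<integral>\<^sup>+x. ennreal (norm (indicator D x *\<^sub>R flux_recovery D \<omega> q x)) \<partial>lebesgue) \<le> mixed_norm D q"
      unfolding mixed_norm_def
    proof (rule nn_integral_mono)
      fix x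
      show "ennreal (norm (indicator D x *\<^sub>R flux_recovery D \<omega> q x)) \<le> inner_L2 D q x * indicator D x"
        using bound[OF q, of x] by (simp add: indicator_def)
    qed
    have int: "integrable lebesgue (\<lambda>x. indicator D x *\<^sub>R flux_recovery D \<omega> q x)"
      by (rule integrableI_bounded) (measurable, use nnle fin in auto)
    then show "set_integrable lebesgue D (flux_recovery D \<omega> q)"
      unfolding set_integrable_def .
    have "ennreal (\<integral>x\<in>D. norm (flux_recovery D \<omega> q x) \<partial>lebesgue)
        = ennreal (\<integral>x. norm (indicator D x *\<^sub>R flux_recovery D \<omega> q x) \<partial>lebesgue)"
      unfolding set_lebesgue_integral_def
      by (intro arg_cong[where f=ennreal] Bochner_Integration.integral_cong refl) (simp add: indicator_def)
    also have "\<dots> = (\<integral>\<^sup>+x. ennreal (norm (indicator D x *\<^sub>R flux_recovery D \<omega> q x)) \<partial>lebesgue)"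
      by (rule nn_integral_eq_integral[symmetric], rule integrable_norm[OF int]) auto
    also have "\<dots> \<le> mixed_norm D q" by (rule nnle)
    finally show "ennreal (\<integral>x\<in>D. norm (flux_recovery D \<omega> q x) \<partial>lebesgue) \<le> mixed_norm D q" .
  qed
  have part2: "AE x in lebesgue. x \<in> D \<longrightarrow>
            flux_recovery D \<omega> (\<lambda>p. a * q1 p + b * q2 p) x
              = a *\<^sub>R flux_recovery D \<omega> q1 x + b *\<^sub>R flux_recovery D \<omega> q2 x"
    if q1: "q1 \<in> L12 D" and q2: "q2 \<in> L12 D" for q1 q2 a b
    using Ifin[OF q1] Ifin[OF q2]
  proof eventually_elim
    case (elim x)
    show ?case
    proof
      assume xD: "x \<in> D"
      have i1: "integrable lebesgue (\<lambda>x'. indicator D x' *\<^sub>R ((q1 (x, x') * \<omega> (x - x')) *\<^sub>R (x - x')))"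
        using pw(1)[OF q1, of x] elim xD unfolding set_integrable_def by auto
      have i2: "integrable lebesgue (\<lambda>x'. indicator D x' *\<^sub>R ((q2 (x, x') * \<omega> (x - x')) *\<^sub>R (x - x')))"
        using pw(1)[OF q2, of x] elim xD unfolding set_integrable_def by auto
      have "flux_recovery D \<omega> (\<lambda>p. a * q1 p + b * q2 p) x
          = (\<integral>x'. a *\<^sub>R (indicator D x' *\<^sub>R ((q1 (x, x') * \<omega> (x - x')) *\<^sub>R (x - x')))
                 + b *\<^sub>R (indicator D x' *\<^sub>R ((q2 (x, x') * \<omega> (x - x')) *\<^sub>R (x - x'))) \<partial>lebesgue)"
        unfolding flux_recovery_def set_lebesgue_integral_def
        by (intro Bochner_Integration.integral_cong refl) (simp add: scaleR_add_left algebra_simps)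
      also have "\<dots> = (\<integral>x'. a *\<^sub>R (indicator D x' *\<^sub>R ((q1 (x, x') * \<omega> (x - x')) *\<^sub>R (x - x'))) \<partial>lebesgue)
                 + (\<integral>x'. b *\<^sub>R (indicator D x' *\<^sub>R ((q2 (x, x') * \<omega> (x - x')) *\<^sub>R (x - x'))) \<partial>lebesgue)"
        by (rule Bochner_Integration.integral_add; rule integrable_scaleR_right; rule i1 i2)
      also have "\<dots> = a *\<^sub>R (\<integral>x'. indicator D x' *\<^sub>R ((q1 (x, x') * \<omega> (x - x')) *\<^sub>R (x - x')) \<partial>lebesgue)
                 + b *\<^sub>R (\<integral>x'. indicator D x' *\<^sub>R ((q2 (x, x') * \<omega> (x - x')) *\<^sub>R (x - x')) \<partial>lebesgue)"
        by (simp only: integral_scaleR_right)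
      also have "\<dots> = a *\<^sub>R flux_recovery D \<omega> q1 x + b *\<^sub>R flux_recovery D \<omega> q2 x"
        unfolding flux_recovery_def set_lebesgue_integral_def ..
      finally show "flux_recovery D \<omega> (\<lambda>p. a * q1 p + b * q2 p) x
              = a *\<^sub>R flux_recovery D \<omega> q1 x + b *\<^sub>R flux_recovery D \<omega> q2 x" .
    qed
  qed
  show ?thesis using part1 part2 by blast
qed


theorem proposition4p10:
  fixes \<Omega> :: "'a::euclidean_space set" and \<delta> :: real
    and \<omega> :: "'a \<Rightarrow> real" and e :: 'a
  assumes dim: "DIM('a) \<ge> 2"
    and \<Omega>_open: "open \<Omega>" and \<Omega>_bdd: "bounded \<Omega>"
    and \<delta>_pos: "\<delta> > 0"
    and e_unit: "norm e = 1"
    and \<omega>_nonneg: "\<And>z. \<omega> z \<ge> 0"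
    and \<omega>_meas: "\<omega> \<in> borel_measurable lebesgue"
    and \<omega>_radial: "\<And>z z'. norm z = norm z' \<Longrightarrow> \<omega> z = \<omega> z'"
    and \<omega>_supp: "\<And>z. norm z \<ge> \<delta> \<Longrightarrow> \<omega> z = 0"
    and \<omega>_norm: "(\<integral>\<^sup>+z. ennreal ((norm z)\<^sup>2 * (\<omega> z)\<^sup>2) \<partial>lebesgue) = ennreal (1 / K2 e)"
  shows
    "(\<forall>q\<in>L12 (nbhd \<Omega> \<delta>).
        (AE x in lebesgue. x \<in> nbhd \<Omega> \<delta> \<longrightarrow>
           set_integrable lebesgue (nbhd \<Omega> \<delta>) (\<lambda>x'. (q (x, x') * \<omega> (x - x')) *\<^sub>R (x - x'))) \<and>
        set_integrable lebesgue (nbhd \<Omega> \<delta>) (flux_recovery (nbhd \<Omega> \<delta>) \<omega> q) \<and>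
        ennreal (\<integral>x\<in>nbhd \<Omega> \<delta>. norm (flux_recovery (nbhd \<Omega> \<delta>) \<omega> q x) \<partial>lebesgue)
          \<le> mixed_norm (nbhd \<Omega> \<delta>) q)
     \<and> (\<forall>q1\<in>L12 (nbhd \<Omega> \<delta>). \<forall>q2\<in>L12 (nbhd \<Omega> \<delta>). \<forall>a b::real.
          AE x in lebesgue. x \<in> nbhd \<Omega> \<delta> \<longrightarrow>
            flux_recovery (nbhd \<Omega> \<delta>) \<omega> (\<lambda>p. a * q1 p + b * q2 p) x
              = a *\<^sub>R flux_recovery (nbhd \<Omega> \<delta>) \<omega> q1 x + b *\<^sub>R flux_recovery (nbhd \<Omega> \<delta>) \<omega> q2 x)"
  proof -
  have "open (nbhd \<Omega> \<delta>)" unfolding nbhd_def by (intro open_UN ballI open_ball)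
  then have Db: "nbhd \<Omega> \<delta> \<in> sets borel" by simp
  show ?thesis by (rule main_result[OF e_unit \<omega>_meas \<omega>_radial \<omega>_norm Db])
qed

end
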